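(* Let $H=(V,E)$ be a $k$-uniform hypergraph and $U\subseteq V$ such that every edge of the projected hypergraph $H[U]$ has size at most two. Then, over the polynomial ring over $\mathrm{GF}(2^m)$ (any $m\geq1$) in the variables $s$ and $\{v_e\}_{e\in E}$, $$\det(\mathbf{T}^{(s)}(H,U))=\sum_{M\in\mathcal{M}}s^{\Lambda(M)}\prod_{e\in M}v_e^{p(e)},$$ where $\mathcal{M}$ is the set of all perfect matchings of $H[U]$, $\Lambda(M)$ is the number of loops in $M$, and $p(e)=1$ if $e$ is a loop and $p(e)=2$ otherwise.
   Context: A hypergraph $H=(V,E)$ has a finite vertex set $V$ and a multiset $E$ of subsets of $V$; $k$-uniform means all edges have size $k$. For $U\subseteq V$, the projected hypergraph $H[U]$ has one edge $e\cap U$ for each $e\in E$. An edge $e$ is a loop (at $i$) if $e\cap U=\{i\}$. Each $e\in E$ has a variable $v_e$. The Tutte matrix of index $s$, $\mathbf{T}^{(s)}(H,U)$, is the $|U|\times|U|$ matrix with rows and columns indexed by $U$, with $\mathbf{T}_{i,j}=\sum v_e$ over all $e\in E$ with $e\cap U=\{i,j\}$ for $i\neq j$, and $\mathbf{T}_{i,i}=s\sum v_e$ over all $e\in E$ with $e\cap U=\{i\}$. A perfect matching of $H[U]$ is a set $M\subseteq E$ of edges (multiset occurrences distinct) with nonempty projections on $U$ that are pairwise disjoint and cover $U$; a loop covers its single vertex. *)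

theory Defs
  imports "HOL-Library.Poly_Mapping" "HOL-Combinatorics.Permutations"
begin

text \<open>Hypergraph: finite vertex set V, finite index set E of edge occurrences
  (so that E may be a multiset), and edge :: 'e \<Rightarrow> 'v set giving each edge.\<close>

definition k_uniform :: "nat \<Rightarrow> 'v set \<Rightarrow> 'e set \<Rightarrow> ('e \<Rightarrow> 'v set) \<Rightarrow> bool" where
  "k_uniform k V E edge \<longleftrightarrow> finite V \<and> finite E \<and> (\<forall>e\<in>E. edge e \<subseteq> V \<and> card (edge e) = k)"

datatype 'e tvar = SVar | EVar 'e

type_synonym ('x, 'k) mpoly = "('x \<Rightarrow>\<^sub>0 nat) \<Rightarrow>\<^sub>0 'k"

definition pvar :: "'x \<Rightarrow> ('x, 'k::{zero,one}) mpoly" where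
  "pvar x = Poly_Mapping.single (Poly_Mapping.single x 1) 1"

definition is_loop :: "'v set \<Rightarrow> ('e \<Rightarrow> 'v set) \<Rightarrow> 'e \<Rightarrow> bool" where
  "is_loop U edge e \<longleftrightarrow> card (edge e \<inter> U) = 1"

definition tutte :: "'v set \<Rightarrow> 'e set \<Rightarrow> ('e \<Rightarrow> 'v set) \<Rightarrow> 'a::comm_ring_1 \<Rightarrow> ('e \<Rightarrow> 'a)
    \<Rightarrow> 'v \<Rightarrow> 'v \<Rightarrow> 'a" where
  "tutte U E edge s v i j =
     (if i = j then s * (\<Sum>e\<in>{e\<in>E. edge e \<inter> U = {i}}. v e)
      else (\<Sum>e\<in>{e\<in>E. edge e \<inter> U = {i, j}}. v e))"

definition det_on :: "'i set \<Rightarrow> ('i \<Rightarrow> 'i \<Rightarrow> 'a::comm_ring_1) \<Rightarrow> 'a" where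
  "det_on I A = (\<Sum>p\<in>{p. p permutes I}. of_int (sign p) * (\<Prod>i\<in>I. A i (p i)))"

definition perfect_matching :: "'v set \<Rightarrow> 'e set \<Rightarrow> ('e \<Rightarrow> 'v set) \<Rightarrow> 'e set \<Rightarrow> bool" where
  "perfect_matching U E edge M \<longleftrightarrow>
     M \<subseteq> E \<and> (\<forall>e\<in>M. edge e \<inter> U \<noteq> {}) \<and>
     (\<forall>e\<in>M. \<forall>f\<in>M. e \<noteq> f \<longrightarrow> edge e \<inter> edge f \<inter> U = {}) \<and>
     (\<Union>e\<in>M. edge e \<inter> U) = U"

end

theory Submission
  imports Defs
begin


lemma invol_sum_zero:
  fixes f :: "'b \<Rightarrow> 'a::comm_ring_1"
  assumes "finite S" "\<forall>x\<in>S. g x \<in> S \<and> g (g x) = x \<and> g x \<noteq> x \<and> f (g x) = f x"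
    and two: "(1::'a) + 1 = 0"
  shows "sum f S = 0"
  using assms(1,2)
proof (induction S rule: finite_psubset_induct)
  case (psubset S)
  show ?case
  proof (cases "S = {}")
    case True then show ?thesis by simp
  next
    case False
    then obtain x where x: "x \<in> S" by blast
    let ?S' = "S - {x, g x}"
    have gx: "g x \<in> S" "g x \<noteq> x" "f (g x) = f x" using x psubset.prems by auto
    have "sum f ?S' = 0"
    proof (rule psubset.IH)
      show "?S' \<subset> S" using x by auto
      show "\<forall>y\<in>?S'. g y \<in> ?S' \<and> g (g y) = y \<and> g y \<noteq> y \<and> f (g y) = f y"
      proof
        fix y assume y: "y \<in> ?S'"
        then have yS: "y \<in> S" "y \<noteq> x" "y \<noteq> g x" by auto
        have P: "g y \<in> S" "g (g y) = y" "g y \<noteq> y" "f (g y) = f y" using yS(1) psubset.prems by auto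
        have "g y \<noteq> x" using P(2) yS(3) by auto
        moreover have "g y \<noteq> g x" using P(2) yS(2) x psubset.prems by metis
        ultimately show "g y \<in> ?S' \<and> g (g y) = y \<and> g y \<noteq> y \<and> f (g y) = f y" using P by auto
      qed
    qed
    moreover have "sum f S = f x + f (g x) + sum f ?S'"
    proof -
      have "sum f S = f x + sum f (S - {x})" using x psubset.hyps by (simp add: sum.remove)
      also have "sum f (S - {x}) = f (g x) + sum f (S - {x} - {g x})"
        using gx psubset.hyps by (intro sum.remove) auto
      finally show ?thesis by (simp add: Diff_insert2[symmetric] add.assoc insert_commute)
    qed
    moreover have "f x + f x = 0" by (metis distrib_left mult.right_neutral two mult_zero_right)
    ultimately show ?thesis using gx by simp
  qed
qed

lemma invol_card_even:
  assumes "finite S" "\<forall>x\<in>S. g x \<in> S \<and> g (g x) = x \<and> g x \<noteq> x"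
  shows "even (card S)"
  using assms
proof (induction S rule: finite_psubset_induct)
  case (psubset S)
  show ?case
  proof (cases "S = {}")
    case True then show ?thesis by simp
  next
    case False
    then obtain x where x: "x \<in> S" by blast
    let ?S' = "S - {x, g x}"
    have gx: "g x \<in> S" "g x \<noteq> x" using x psubset.prems by auto
    have "even (card ?S')"
    proof (rule psubset.IH)
      show "?S' \<subset> S" using x by auto
      show "\<forall>y\<in>?S'. g y \<in> ?S' \<and> g (g y) = y \<and> g y \<noteq> y"
      proof
        fix y assume y: "y \<in> ?S'"
        then have yS: "y \<in> S" "y \<noteq> x" "y \<noteq> g x" by auto
        have P: "g y \<in> S" "g (g y) = y" "g y \<noteq> y" using yS(1) psubset.prems by auto
        have "g y \<noteq> x" using P(2) yS(3) by auto
        moreover have "g y \<noteq> g x" using P(2) yS(2) x psubset.prems by metis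
        ultimately show "g y \<in> ?S' \<and> g (g y) = y \<and> g y \<noteq> y" using P by auto
      qed
    qed
    moreover have "card S = card ?S' + 2"
    proof -
      have "card S = Suc (card (S - {x}))" using x psubset.hyps by (intro card.remove)
      moreover have "card (S - {x}) = Suc (card (S - {x} - {g x}))"
        using gx psubset.hyps by (intro card.remove) auto
      moreover have "S - {x} - {g x} = ?S'" by auto
      ultimately show ?thesis by simp
    qed
    ultimately show ?thesis by simp
  qed
qed

lemma char2_field:
  assumes "card (UNIV :: 'k::{field,finite} set) = 2 ^ m" "m \<ge> 1"
  shows "(1::'k) + 1 = 0"
proof (rule ccontr)
  assume ne: "(1::'k) + 1 \<noteq> 0"
  let ?S = "UNIV - {0::'k}"
  have "even (card ?S)"
  proof (rule invol_card_even[where g = uminus])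
    show "finite ?S" by simp
    show "\<forall>x\<in>?S. - x \<in> ?S \<and> - (- x) = x \<and> - x \<noteq> x"
    proof
      fix x assume x: "x \<in> ?S"
      have "- x \<noteq> x"
      proof
        assume "- x = x"
        then have "x + x = 0" by (metis add.right_inverse)
        then have "(1 + 1) * x = 0" by (simp add: distrib_right)
        with ne x show False by simp
      qed
      then show "- x \<in> ?S \<and> - (- x) = x \<and> - x \<noteq> x" using x by auto
    qed
  qed
  moreover have "card ?S = card (UNIV::'k set) - 1" by (simp add: card_Diff_singleton)
  moreover have "even (card (UNIV::'k set))" using assms by (cases m) auto
  moreover have "card (UNIV::'k set) \<ge> 1" using assms by simp
  ultimately show False by presburger
qed



lemma det_char2:
  fixes A :: "'i \<Rightarrow> 'i \<Rightarrow> 'a::comm_ring_1"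
  assumes two: "(1::'a) + 1 = 0"
  shows "det_on I A = (\<Sum>p\<in>{p. p permutes I}. \<Prod>i\<in>I. A i (p i))"
proof -
  have m1: "(-1::'a) = 1" by (metis add.inverse_unique two)
  have "of_int (sign p) = (1::'a)" for p :: "'i \<Rightarrow> 'i"
    by (simp add: sign_def m1)
  then show ?thesis unfolding det_on_def by simp
qed

locale tsetup =
  fixes U :: "'v set" and E :: "'e set" and edge :: "'e \<Rightarrow> 'v set"
  assumes finU: "finite U" and finE: "finite E" and two: "\<forall>e\<in>E. card (edge e \<inter> U) \<le> 2"
begin

definition Eij :: "'v \<Rightarrow> 'v \<Rightarrow> 'e set" where "Eij i j = {e\<in>E. edge e \<inter> U = {i,j}}"
definition wt :: "'a::comm_ring_1 \<Rightarrow> ('e \<Rightarrow> 'a) \<Rightarrow> 'e \<Rightarrow> 'a" where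
  "wt s v e = (if card (edge e \<inter> U) = 1 then s * v e else v e)"
definition Sg :: "(('v \<Rightarrow> 'v) \<times> ('v \<Rightarrow> 'e)) set" where
  "Sg = Sigma {p. p permutes U} (\<lambda>p. PiE U (\<lambda>i. Eij i (p i)))"
definition Finv :: "('v \<Rightarrow> 'v) \<times> ('v \<Rightarrow> 'e) \<Rightarrow> ('v \<Rightarrow> 'v) \<times> ('v \<Rightarrow> 'e)" where
  "Finv x = (inv (fst x), \<lambda>i. if i \<in> U then snd x (inv (fst x) i) else undefined)"
definition G :: "'a::comm_ring_1 \<Rightarrow> ('e \<Rightarrow> 'a) \<Rightarrow> ('v \<Rightarrow> 'v) \<times> ('v \<Rightarrow> 'e) \<Rightarrow> 'a" where
  "G s v x = (\<Prod>i\<in>U. wt s v (snd x i))"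

lemma finEij: "finite (Eij i j)" unfolding Eij_def using finE by simp

lemma tutte_eq: "tutte U E edge s v i j = sum (wt s v) (Eij i j)"
proof (cases "i = j")
  case True
  have "sum (wt s v) (Eij i j) = (\<Sum>e\<in>Eij i j. s * v e)"
    by (rule sum.cong) (auto simp: wt_def Eij_def True)
  then show ?thesis by (simp add: tutte_def True Eij_def sum_distrib_left)
next
  case False
  have "sum (wt s v) (Eij i j) = (\<Sum>e\<in>Eij i j. v e)"
    by (rule sum.cong) (auto simp: wt_def Eij_def False)
  then show ?thesis by (simp add: tutte_def False Eij_def)
qed

lemma step2: "(\<Prod>i\<in>U. tutte U E edge s v i (p i)) = (\<Sum>\<phi>\<in>PiE U (\<lambda>i. Eij i (p i)). \<Prod>i\<in>U. wt s v (\<phi> i))"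
  by (simp add: tutte_eq prod_sum_PiE finU finEij)

lemma finSg: "finite Sg"
proof -
  have "finite {p. p permutes U}" using finU by (simp add: finite_permutations)
  moreover have "finite (PiE U (\<lambda>i. Eij i (p i)))" for p using finU finEij by (intro finite_PiE) auto
  ultimately show ?thesis unfolding Sg_def by (intro finite_SigmaI) auto
qed

lemma step3: "(\<Sum>p\<in>{p. p permutes U}. \<Prod>i\<in>U. tutte U E edge s v i (p i)) = sum (G s v) Sg"
proof -
  have "(\<Sum>p\<in>{p. p permutes U}. \<Prod>i\<in>U. tutte U E edge s v i (p i))
     = (\<Sum>p\<in>{p. p permutes U}. \<Sum>\<phi>\<in>PiE U (\<lambda>i. Eij i (p i)). G s v (p, \<phi>))"
    by (simp add: step2 G_def)
  also have "\<dots> = sum (G s v) Sg" unfolding Sg_def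
    by (subst sum.Sigma) (auto simp: finite_permutations finU finEij intro!: finite_PiE)
  finally show ?thesis .
qed

lemma Sg_D:
  assumes "x \<in> Sg"
  shows "fst x permutes U" "\<And>i. i \<in> U \<Longrightarrow> edge (snd x i) \<inter> U = {i, fst x i}"
    "\<And>i. i \<in> U \<Longrightarrow> snd x i \<in> E" "\<And>i. i \<notin> U \<Longrightarrow> snd x i = undefined"
proof -
  have a: "fst x permutes U" "snd x \<in> PiE U (\<lambda>i. Eij i (fst x i))" using assms unfolding Sg_def by auto
  show "fst x permutes U" by (rule a(1))
  fix i
  show "i \<in> U \<Longrightarrow> edge (snd x i) \<inter> U = {i, fst x i}" using PiE_mem[OF a(2)] unfolding Eij_def by blast
  show "i \<in> U \<Longrightarrow> snd x i \<in> E" using PiE_mem[OF a(2)] unfolding Eij_def by blast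
  show "i \<notin> U \<Longrightarrow> snd x i = undefined" using PiE_arb[OF a(2)] by blast
qed

lemma Sg_I:
  assumes "p permutes U" "\<And>i. i \<in> U \<Longrightarrow> edge (\<phi> i) \<inter> U = {i, p i}"
    "\<And>i. i \<in> U \<Longrightarrow> \<phi> i \<in> E" "\<And>i. i \<notin> U \<Longrightarrow> \<phi> i = undefined"
  shows "(p, \<phi>) \<in> Sg"
  using assms unfolding Sg_def Eij_def by (auto simp: PiE_def extensional_def)

lemma Finv_in:
  assumes x: "x \<in> Sg" shows "Finv x \<in> Sg"
proof -
  let ?p = "fst x" let ?f = "snd x"
  have p: "?p permutes U" using Sg_D[OF x] by simp
  show ?thesis unfolding Finv_def
  proof (rule Sg_I)
    show "inv ?p permutes U" using p by (rule permutes_inv)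
    fix i assume i: "i \<in> U"
    have ii: "inv ?p i \<in> U" using p i by (simp add: permutes_in_image permutes_inv)
    have "?p (inv ?p i) = i" using p by (simp add: permutes_inverses)
    then show "edge (if i \<in> U then ?f (inv ?p i) else undefined) \<inter> U = {i, inv ?p i}"
      using Sg_D(2)[OF x ii] i by auto
    show "(if i \<in> U then ?f (inv ?p i) else undefined) \<in> E" using Sg_D(3)[OF x ii] i by simp
  qed auto
qed

lemma Finv_Finv:
  assumes x: "x \<in> Sg" shows "Finv (Finv x) = x"
proof -
  obtain p f where xe: "x = (p, f)" by (cases x)
  have p: "p permutes U" using Sg_D[OF x] xe by simp
  have ip: "inv (inv p) = p" using p by (simp add: permutes_inv_inv)
  have "(\<lambda>i. if i \<in> U then (if p i \<in> U then f (inv p (p i)) else undefined) else undefined) = f"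
  proof
    fix i show "(if i \<in> U then (if p i \<in> U then f (inv p (p i)) else undefined) else undefined) = f i"
      using Sg_D(4)[OF x] xe p
      by (auto simp: permutes_in_image permutes_inverses)
  qed
  moreover have "Finv x = (inv p, \<lambda>i. if i \<in> U then f (inv p i) else undefined)"
    unfolding Finv_def xe by (simp only: fst_conv snd_conv)
  moreover have "Finv (inv p, g) = (inv (inv p), \<lambda>i. if i \<in> U then g (inv (inv p) i) else undefined)" for g
    unfolding Finv_def by (simp only: fst_conv snd_conv)
  ultimately show ?thesis unfolding xe ip by simp
qed

lemma G_Finv:
  assumes x: "x \<in> Sg" shows "G s v (Finv x) = G s v x"
proof -
  have p: "inv (fst x) permutes U" using Sg_D(1)[OF x] by (rule permutes_inv)
  have "G s v (Finv x) = (\<Prod>i\<in>U. wt s v (snd x (inv (fst x) i)))"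
    unfolding G_def Finv_def by (intro prod.cong) auto
  also have "\<dots> = G s v x" unfolding G_def
    using prod.permute[OF p, of "\<lambda>i. wt s v (snd x i)"] by (simp add: comp_def)
  finally show ?thesis .
qed

lemma cancel:
  fixes s :: "'a::comm_ring_1"
  assumes tw: "(1::'a) + 1 = 0"
  shows "sum (G s v) Sg = sum (G s v) {x\<in>Sg. Finv x = x}"
proof -
  have "sum (G s v) Sg = sum (G s v) (Sg - {x\<in>Sg. Finv x = x}) + sum (G s v) {x\<in>Sg. Finv x = x}"
    by (rule sum.subset_diff) (auto simp: finSg)
  moreover have "sum (G s v) (Sg - {x\<in>Sg. Finv x = x}) = 0"
  proof (rule invol_sum_zero[OF _ _ tw])
    show "finite (Sg - {x\<in>Sg. Finv x = x})" using finSg by simp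
    show "\<forall>x\<in>Sg - {x\<in>Sg. Finv x = x}. Finv x \<in> Sg - {x\<in>Sg. Finv x = x} \<and> Finv (Finv x) = x
       \<and> Finv x \<noteq> x \<and> G s v (Finv x) = G s v x"
      using Finv_in Finv_Finv G_Finv by fastforce
  qed
  ultimately show ?thesis by simp
qed

end


lemma card_le2_pair:
  assumes "finite A" "card A \<le> 2" "i \<in> A"
  shows "\<exists>j. A = {i, j}"
proof (cases "A - {i} = {}")
  case True then show ?thesis using assms(3) by auto
next
  case False
  have "card (A - {i}) = card A - 1" using assms by (simp add: card_Diff_singleton)
  moreover have "card (A - {i}) \<noteq> 0" using False assms(1) by simp
  ultimately have "card (A - {i}) = 1" using assms(2) by linarith
  then obtain j where "A - {i} = {j}" by (auto simp: card_1_singleton_iff)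
  then have "A = {i, j}" using assms(3) by auto
  then show ?thesis by blast
qed

context tsetup
begin

definition W :: "'a::comm_ring_1 \<Rightarrow> ('e \<Rightarrow> 'a) \<Rightarrow> 'e \<Rightarrow> 'a" where
  "W s v e = (if card (edge e \<inter> U) = 1 then s * v e else v e ^ 2)"

lemma fixed_phi:
  assumes x: "x \<in> Sg" "Finv x = x" and i: "i \<in> U"
  shows "snd x (fst x i) = snd x i"
proof -
  obtain p f where xe: "x = (p, f)" by (cases x)
  have p: "p permutes U" using Sg_D[OF x(1)] xe by simp
  have pi: "p i \<in> U" using p i by (simp add: permutes_in_image)
  have ii: "inv p (p i) = i" using p by (simp add: permutes_inverses)
  have "snd (Finv x) (p i) = (if p i \<in> U then f (inv p (p i)) else undefined)"
    unfolding Finv_def xe by (simp only: fst_conv snd_conv)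
  also have "\<dots> = f i" by (simp only: pi ii if_True)
  finally have "snd (Finv x) (p i) = f i" .
  then have "f (p i) = f i" using x(2) xe by simp
  then show ?thesis using xe by simp
qed

lemma fixed_key:
  assumes x: "x \<in> Sg" "Finv x = x" and i: "i \<in> U" and y: "y \<in> edge (snd x i) \<inter> U"
  shows "snd x y = snd x i"
proof -
  have "y \<in> {i, fst x i}" using Sg_D(2)[OF x(1) i] y by simp
  then show ?thesis using fixed_phi[OF x i] by auto
qed

lemma self_in: "x \<in> Sg \<Longrightarrow> i \<in> U \<Longrightarrow> i \<in> edge (snd x i)"
  using Sg_D(2) by blast

lemma fixed_fiber:
  assumes x: "x \<in> Sg" "Finv x = x" and i: "i \<in> U"
  shows "{j\<in>U. snd x j = snd x i} = edge (snd x i) \<inter> U"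
proof
  show "{j\<in>U. snd x j = snd x i} \<subseteq> edge (snd x i) \<inter> U"
    using self_in[OF x(1)] by force
  show "edge (snd x i) \<inter> U \<subseteq> {j\<in>U. snd x j = snd x i}"
    using fixed_key[OF x i] by blast
qed

lemma G_fixed:
  assumes x: "x \<in> Sg" "Finv x = x"
  shows "G s v x = (\<Prod>e\<in>snd x ` U. W s v e)"
proof -
  have "G s v x = (\<Prod>e\<in>snd x ` U. \<Prod>i\<in>{j\<in>U. snd x j = e}. wt s v (snd x i))"
    unfolding G_def by (rule prod.image_gen[OF finU])
  also have "\<dots> = (\<Prod>e\<in>snd x ` U. W s v e)"
  proof (rule prod.cong[OF refl])
    fix e assume "e \<in> snd x ` U"
    then obtain i where i: "i \<in> U" and e: "e = snd x i" by blast
    have "(\<Prod>j\<in>{j\<in>U. snd x j = e}. wt s v (snd x j)) = (\<Prod>j\<in>edge e \<inter> U. wt s v e)"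
    proof (rule prod.cong)
      show "{j\<in>U. snd x j = e} = edge e \<inter> U" using fixed_fiber[OF x i] e by simp
      fix j assume "j \<in> edge e \<inter> U"
      then have "j \<in> {j\<in>U. snd x j = e}" using fixed_fiber[OF x i] e by simp
      then show "wt s v (snd x j) = wt s v e" by simp
    qed
    also have "\<dots> = wt s v e ^ card (edge e \<inter> U)" by (rule prod_constant)
    also have "\<dots> = W s v e"
    proof (cases "fst x i = i")
      case True
      then have "edge e \<inter> U = {i}" using Sg_D(2)[OF x(1) i] e by simp
      then show ?thesis by (simp add: wt_def W_def)
    next
      case False
      then have "card (edge e \<inter> U) = 2" using Sg_D(2)[OF x(1) i] e by simp
      then show ?thesis by (simp add: wt_def W_def)
    qed
    finally show "(\<Prod>j\<in>{j\<in>U. snd x j = e}. wt s v (snd x j)) = W s v e" .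
  qed
  finally show ?thesis .
qed

lemma match_img:
  assumes x: "x \<in> Sg" "Finv x = x"
  shows "perfect_matching U E edge (snd x ` U)"
  unfolding perfect_matching_def
proof (intro conjI)
  show "snd x ` U \<subseteq> E" using Sg_D(3)[OF x(1)] by blast
  show "\<forall>e\<in>snd x ` U. edge e \<inter> U \<noteq> {}" using self_in[OF x(1)] by blast
  show "\<forall>e\<in>snd x ` U. \<forall>f\<in>snd x ` U. e \<noteq> f \<longrightarrow> edge e \<inter> edge f \<inter> U = {}"
  proof (intro ballI impI)
    fix e f assume e: "e \<in> snd x ` U" and f: "f \<in> snd x ` U" and ne: "e \<noteq> f"
    obtain i where i: "i \<in> U" "e = snd x i" using e by blast
    obtain j where j: "j \<in> U" "f = snd x j" using f by blast
    show "edge e \<inter> edge f \<inter> U = {}"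
    proof (rule ccontr)
      assume "edge e \<inter> edge f \<inter> U \<noteq> {}"
      then obtain y where y: "y \<in> edge e" "y \<in> edge f" "y \<in> U" by blast
      have "snd x y = snd x i" by (rule fixed_key[OF x i(1)]) (use y i(2) in simp)
      moreover have "snd x y = snd x j" by (rule fixed_key[OF x j(1)]) (use y j(2) in simp)
      ultimately have "e = f" using i(2) j(2) by simp
      then show False using ne by simp
    qed
  qed
  show "(\<Union>e\<in>snd x ` U. edge e \<inter> U) = U"
  proof
    show "(\<Union>e\<in>snd x ` U. edge e \<inter> U) \<subseteq> U" by blast
    show "U \<subseteq> (\<Union>e\<in>snd x ` U. edge e \<inter> U)"
    proof
      fix i assume i: "i \<in> U"
      then have "i \<in> edge (snd x i) \<inter> U" using self_in[OF x(1) i] by simp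
      moreover have "snd x i \<in> snd x ` U" using i by simp
      ultimately show "i \<in> (\<Union>e\<in>snd x ` U. edge e \<inter> U)" by blast
    qed
  qed
qed

lemma img_inj: "inj_on (\<lambda>x. snd x ` U) {x\<in>Sg. Finv x = x}"
proof (rule inj_onI)
  fix x y assume x: "x \<in> {x\<in>Sg. Finv x = x}" and y: "y \<in> {x\<in>Sg. Finv x = x}"
    and eq: "snd x ` U = snd y ` U"
  have xx: "x \<in> Sg" "Finv x = x" and yy: "y \<in> Sg" "Finv y = y" using x y by auto
  have s: "snd x = snd y"
  proof
    fix i show "snd x i = snd y i"
    proof (cases "i \<in> U")
      case True
      then have "snd x i \<in> snd y ` U" using eq by blast
      then obtain j where j: "j \<in> U" "snd x i = snd y j" by blast
      have "i \<in> edge (snd y j) \<inter> U" using self_in[OF xx(1) True] j True by simp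
      then have "snd y i = snd y j" using fixed_key[OF yy j(1)] by blast
      then show ?thesis using j by simp
    next
      case False then show ?thesis using Sg_D(4)[OF xx(1)] Sg_D(4)[OF yy(1)] by simp
    qed
  qed
  have f: "fst x = fst y"
  proof
    fix i show "fst x i = fst y i"
    proof (cases "i \<in> U")
      case True
      have "{i, fst x i} = {i, fst y i}" using Sg_D(2)[OF xx(1) True] Sg_D(2)[OF yy(1) True] s by simp
      then show ?thesis by (metis doubleton_eq_iff)
    next
      case False then show ?thesis
        using Sg_D(1)[OF xx(1)] Sg_D(1)[OF yy(1)] by (simp add: permutes_not_in)
    qed
  qed
  show "x = y" using s f by (simp add: prod_eq_iff)
qed

lemma img_surj:
  assumes M: "perfect_matching U E edge M"
  shows "\<exists>x\<in>Sg. Finv x = x \<and> snd x ` U = M"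
proof -
  have ME: "M \<subseteq> E" and nonempty: "\<forall>e\<in>M. edge e \<inter> U \<noteq> {}"
    and disj: "\<forall>e\<in>M. \<forall>f\<in>M. e \<noteq> f \<longrightarrow> edge e \<inter> edge f \<inter> U = {}"
    and cov: "(\<Union>e\<in>M. edge e \<inter> U) = U"
    using M unfolding perfect_matching_def by auto
  have ex1: "\<exists>!e. e \<in> M \<and> i \<in> edge e" if i: "i \<in> U" for i
  proof -
    obtain e where "e \<in> M" "i \<in> edge e" using cov i by blast
    moreover have "e' = e" if "e' \<in> M" "i \<in> edge e'" for e'
      using disj that \<open>e \<in> M\<close> \<open>i \<in> edge e\<close> i by blast
    ultimately show ?thesis by blast
  qed
  define f where "f i = (if i \<in> U then (THE e. e \<in> M \<and> i \<in> edge e) else undefined)" for i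
  have fM: "f i \<in> M" "i \<in> edge (f i)" if "i \<in> U" for i
    using theI'[OF ex1[OF that]] that unfolding f_def by auto
  have funiq: "f i = e" if "i \<in> U" "e \<in> M" "i \<in> edge e" for i e
    using ex1[OF that(1)] fM[OF that(1)] that by blast
  have exj: "\<exists>j. edge (f i) \<inter> U = {i, j}" if i: "i \<in> U" for i
  proof (rule card_le2_pair)
    show "finite (edge (f i) \<inter> U)" using finU by simp
    show "card (edge (f i) \<inter> U) \<le> 2" using two fM(1)[OF i] ME by blast
    show "i \<in> edge (f i) \<inter> U" using fM(2)[OF i] i by blast
  qed
  define p where "p i = (if i \<in> U then (SOME j. edge (f i) \<inter> U = {i, j}) else i)" for i
  have pP: "edge (f i) \<inter> U = {i, p i}" if "i \<in> U" for i
    using someI_ex[OF exj[OF that]] that unfolding p_def by simp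
  have pU: "p i \<in> U" if "i \<in> U" for i using pP[OF that] by blast
  have fp: "f (p i) = f i" if i: "i \<in> U" for i
    using funiq[OF pU[OF i] fM(1)[OF i]] pP[OF i] by blast
  have pp: "p (p i) = i" for i
  proof (cases "i \<in> U")
    case True
    have "{p i, p (p i)} = {i, p i}" using pP[OF pU[OF True]] pP[OF True] fp[OF True] by simp
    then show ?thesis by (metis doubleton_eq_iff)
  next
    case False then show ?thesis by (simp add: p_def)
  qed
  have pout: "p i = i" if "i \<notin> U" for i using that by (simp add: p_def)
  have perm: "p permutes U"
    unfolding permutes_def
  proof (intro conjI allI impI)
    show "p x = x" if "x \<notin> U" for x using pout that .
    fix y show "\<exists>!x. p x = y"
    proof
      show "p (p y) = y" by (rule pp)
      fix x assume "p x = y" then show "x = p y" using pp by metis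
    qed
  qed
  have invp: "inv p = p"
  proof
    fix i show "inv p i = p i" using permutes_inv_eq[OF perm] pp by metis
  qed
  have inSg: "(p, f) \<in> Sg"
  proof (rule Sg_I[OF perm])
    show "edge (f i) \<inter> U = {i, p i}" if "i \<in> U" for i using pP[OF that] .
    show "f i \<in> E" if "i \<in> U" for i using fM(1)[OF that] ME by blast
    show "f i = undefined" if "i \<notin> U" for i using that by (simp add: f_def)
  qed
  have fixpf: "Finv (p, f) = (p, f)"
  proof -
    have "Finv (p, f) = (inv p, \<lambda>i. if i \<in> U then f (inv p i) else undefined)"
      unfolding Finv_def by (simp only: fst_conv snd_conv)
    also have "(\<lambda>i. if i \<in> U then f (inv p i) else undefined) = f"
    proof
      fix i show "(if i \<in> U then f (inv p i) else undefined) = f i"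
      proof (cases "i \<in> U")
        case True then show ?thesis using invp fp[OF True] by simp
      next
        case False then show ?thesis unfolding f_def by simp
      qed
    qed
    finally show ?thesis unfolding invp .
  qed
  have img: "f ` U = M"
  proof
    show "f ` U \<subseteq> M" using fM by blast
    show "M \<subseteq> f ` U"
    proof
      fix e assume e: "e \<in> M"
      then obtain i where "i \<in> edge e" "i \<in> U" using nonempty by blast
      then have "f i = e" using funiq e by blast
      then show "e \<in> f ` U" using \<open>i \<in> U\<close> by blast
    qed
  qed
  show ?thesis
  proof (rule bexI[of _ "(p, f)"])
    show "Finv (p, f) = (p, f) \<and> snd (p, f) ` U = M" using fixpf img by simp
  qed (rule inSg)
qed

lemma bij_fixed: "bij_betw (\<lambda>x. snd x ` U) {x\<in>Sg. Finv x = x} {M. perfect_matching U E edge M}"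
  unfolding bij_betw_def
proof
  show "inj_on (\<lambda>x. snd x ` U) {x\<in>Sg. Finv x = x}" by (rule img_inj)
  show "(\<lambda>x. snd x ` U) ` {x\<in>Sg. Finv x = x} = {M. perfect_matching U E edge M}"
  proof
    show "(\<lambda>x. snd x ` U) ` {x\<in>Sg. Finv x = x} \<subseteq> {M. perfect_matching U E edge M}"
    proof
      fix M assume "M \<in> (\<lambda>x. snd x ` U) ` {x\<in>Sg. Finv x = x}"
      then obtain x where "x \<in> Sg" "Finv x = x" "M = snd x ` U" by blast
      then show "M \<in> {M. perfect_matching U E edge M}" using match_img by simp
    qed
    show "{M. perfect_matching U E edge M} \<subseteq> (\<lambda>x. snd x ` U) ` {x\<in>Sg. Finv x = x}"
    proof
      fix M assume "M \<in> {M. perfect_matching U E edge M}"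
      then obtain x where "x \<in> Sg" "Finv x = x" "snd x ` U = M" using img_surj by blast
      then show "M \<in> (\<lambda>x. snd x ` U) ` {x\<in>Sg. Finv x = x}" by blast
    qed
  qed
qed

lemma main:
  fixes s :: "'a::comm_ring_1"
  assumes tw: "(1::'a) + 1 = 0"
  shows "det_on U (tutte U E edge s v) = (\<Sum>M\<in>{M. perfect_matching U E edge M}. \<Prod>e\<in>M. W s v e)"
proof -
  have "det_on U (tutte U E edge s v) = (\<Sum>p\<in>{p. p permutes U}. \<Prod>i\<in>U. tutte U E edge s v i (p i))"
    by (rule det_char2[OF tw])
  also have "\<dots> = sum (G s v) Sg" by (rule step3)
  also have "\<dots> = sum (G s v) {x\<in>Sg. Finv x = x}" by (rule cancel[OF tw])
  also have "\<dots> = (\<Sum>x\<in>{x\<in>Sg. Finv x = x}. \<Prod>e\<in>snd x ` U. W s v e)"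
    using G_fixed by (intro sum.cong) auto
  also have "\<dots> = (\<Sum>M\<in>{M. perfect_matching U E edge M}. \<Prod>e\<in>M. W s v e)"
    by (rule sum.reindex_bij_betw[OF bij_fixed])
  finally show ?thesis .
qed

end

lemma W_prod:
  fixes s :: "'a::comm_ring_1"
  assumes "finite M"
  shows "(\<Prod>e\<in>M. (if P e then s * v e else v e ^ 2)) =
    s ^ card {e\<in>M. P e} * (\<Prod>e\<in>M. v e ^ (if P e then 1 else 2))"
proof -
  have "(\<Prod>e\<in>M. (if P e then s * v e else v e ^ 2)) =
      (\<Prod>e\<in>M. (if P e then s else 1) * v e ^ (if P e then 1 else 2))"
    by (rule prod.cong) auto
  also have "\<dots> = (\<Prod>e\<in>M. (if P e then s else 1)) * (\<Prod>e\<in>M. v e ^ (if P e then 1 else 2))"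
    by (rule prod.distrib)
  also have "(\<Prod>e\<in>M. (if P e then s else 1)) = (\<Prod>e\<in>{e\<in>M. P e}. s)"
    by (rule prod.inter_filter[symmetric, OF assms])
  also have "\<dots> = s ^ card {e\<in>M. P e}" by (rule prod_constant)
  finally show ?thesis .
qed

theorem lemma4p2:
  fixes V :: "'v set" and E :: "'e set" and edge :: "'e \<Rightarrow> 'v set" and U :: "'v set"
    and k m :: nat
  assumes "k_uniform k V E edge"
    and "U \<subseteq> V"
    and "\<forall>e\<in>E. card (edge e \<inter> U) \<le> 2"
    and "m \<ge> 1"
    and "card (UNIV :: 'k::{field,finite} set) = 2 ^ m"
  shows "det_on U (tutte U E edge (pvar SVar :: ('e tvar, 'k) mpoly) (\<lambda>e. pvar (EVar e))) =
    (\<Sum>M\<in>{M. perfect_matching U E edge M}.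
       pvar SVar ^ card {e\<in>M. is_loop U edge e} *
       (\<Prod>e\<in>M. pvar (EVar e) ^ (if is_loop U edge e then 1 else 2)))"
proof -
  have finV: "finite V" and finE: "finite E" using assms(1) unfolding k_uniform_def by auto
  have finU: "finite U" using finV assms(2) by (rule finite_subset[rotated])
  interpret tsetup U E edge using finU finE assms(3) by unfold_locales
  have tw: "(1::'k) + 1 = 0" by (rule char2_field[OF assms(5,4)])
  have twR: "(1::('e tvar, 'k) mpoly) + 1 = 0"
  proof -
    have "(1::('e tvar, 'k) mpoly) + 1 = Poly_Mapping.single 0 ((1::'k) + 1)"
      by (simp only: single_add single_one)
    also have "\<dots> = 0" using tw by simp
    finally show ?thesis .
  qed
  have "det_on U (tutte U E edge (pvar SVar :: ('e tvar, 'k) mpoly) (\<lambda>e. pvar (EVar e))) =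
     (\<Sum>M\<in>{M. perfect_matching U E edge M}. \<Prod>e\<in>M. W (pvar SVar :: ('e tvar, 'k) mpoly) (\<lambda>e. pvar (EVar e)) e)"
    by (rule main[OF twR])
  also have "\<dots> = (\<Sum>M\<in>{M. perfect_matching U E edge M}.
       pvar SVar ^ card {e\<in>M. is_loop U edge e} *
       (\<Prod>e\<in>M. pvar (EVar e) ^ (if is_loop U edge e then 1 else 2)))"
  proof (rule sum.cong[OF refl])
    fix M assume "M \<in> {M. perfect_matching U E edge M}"
    then have "M \<subseteq> E" unfolding perfect_matching_def by simp
    then have finM: "finite M" using finE by (rule finite_subset)
    show "(\<Prod>e\<in>M. W (pvar SVar :: ('e tvar, 'k) mpoly) (\<lambda>e. pvar (EVar e)) e) =
       pvar SVar ^ card {e\<in>M. is_loop U edge e} *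
       (\<Prod>e\<in>M. pvar (EVar e) ^ (if is_loop U edge e then 1 else 2))"
      unfolding W_def is_loop_def by (rule W_prod[OF finM])
  qed
  finally show ?thesis .
qed

end
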